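(* Suppose $f$ is twice differentiable at every point of $\mathbb{R}^{n\times p}$, and let $X\in\mathcal{S}_{n,p}$ be a first-order stationary point of (OCP). Then every eigenvalue of $\mathrm{hess} f(X)$ is an eigenvalue of $\nabla^2h(X)$; conversely, every eigenvalue of $\nabla^2h(X)$ is either an eigenvalue of $\mathrm{hess} f(X)$ or is at least $2\beta-M_2$.
   Context: $f:\mathbb{R}^{n\times p}\to\mathbb{R}$ ($n\ge p$) is differentiable with $f,\nabla f$ locally Lipschitz. (OCP): $\min f(X)$ s.t. $X^\top X=I_p$; $\mathcal{S}_{n,p}=\{X:X^\top X=I_p\}$. $\langle A,B\rangle=\mathrm{tr}(A^\top B)$, $\Phi(M):=\frac12(M+M^\top)$. For $X\in\mathcal{S}_{n,p}$, $\mathcal{T}_X:=\{D:\Phi(D^\top X)=0\}$ and $\mathcal{P}_{\mathcal{T}_X}(W):=W-X\Phi(X^\top W)$ is the orthogonal projection onto $\mathcal{T}_X$. $X\in\mathcal{S}_{n,p}$ is a first-order stationary point of (OCP) if $\nabla f(X)-X\Phi(X^\top\nabla f(X))=0$. The Riemannian Hessian $\mathrm{hess} f(X):\mathcal{T}_X\to\mathcal{T}_X$ is $\mathrm{hess} f(X)[D]:=\mathcal{P}_{\mathcal{T}_X}\big(\nabla^2f(X)[D]-D\Phi(X^\top\nabla f(X))\big)$, so that $\langle D_1,\mathrm{hess} f(X)[D_2]\rangle=\langle D_1,\nabla^2f(X)[D_2]-D_2\Phi(X^\top\nabla f(X))\rangle$ for $D_1,D_2\in\mathcal{T}_X$. $\mathcal{A}(X):=\frac32I_p-\frac12X^\top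 X$, $g(X):=f(X\mathcal{A}(X))$, $h(X):=g(X)+\frac\beta4\|X^\top X-I_p\|_F^2$ with $\beta>0$; $\nabla^2h(X)$ is viewed as a linear operator on $\mathbb{R}^{n\times p}$. $\Omega:=\{X:\|X\|_2\le1+\frac1{12}\}$, $M_2:=\sup_{X\ne Y\in\Omega}\frac{\|\nabla g(X)-\nabla g(Y)\|_F}{\|X-Y\|_F}$. *)

theory Defs
  imports "HOL-Analysis.Analysis"
begin

text \<open>Matrices in R^{n x p} are represented as real^'p^'n (rows indexed by 'n).
  The inner product on this type is the Frobenius inner product tr(A^T B),
  and norm is the Frobenius norm.\<close>

definition sym_part :: "real^'k^'k \<Rightarrow> real^'k^'k" where
  "sym_part M = (1/2) *\<^sub>R (M + transpose M)"

definition stiefel :: "(real^'p^'n) set" where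
  "stiefel = {X. transpose X ** X = mat 1}"

definition tangent_space :: "real^'p^'n \<Rightarrow> (real^'p^'n) set" where
  "tangent_space X = {D. sym_part (transpose D ** X) = 0}"

definition proj_tangent :: "real^'p^'n \<Rightarrow> real^'p^'n \<Rightarrow> real^'p^'n" where
  "proj_tangent X W = W - X ** sym_part (transpose X ** W)"

definition egrad :: "('a::euclidean_space \<Rightarrow> real) \<Rightarrow> 'a \<Rightarrow> 'a" where
  "egrad \<phi> x = (\<Sum>b\<in>Basis. frechet_derivative \<phi> (at x) b *\<^sub>R b)"

definition ehess :: "('a::euclidean_space \<Rightarrow> real) \<Rightarrow> 'a \<Rightarrow> 'a \<Rightarrow> 'a" where
  "ehess \<phi> x = frechet_derivative (egrad \<phi>) (at x)"

definition rhess :: "(real^'p^'n \<Rightarrow> real) \<Rightarrow> real^'p^'n \<Rightarrow> real^'p^'n \<Rightarrow> real^'p^'n" where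
  "rhess f X D = proj_tangent X (ehess f X D - D ** sym_part (transpose X ** egrad f X))"

definition first_order_stationary :: "(real^'p^'n \<Rightarrow> real) \<Rightarrow> real^'p^'n \<Rightarrow> bool" where
  "first_order_stationary f X \<longleftrightarrow>
     X \<in> stiefel \<and> egrad f X - X ** sym_part (transpose X ** egrad f X) = 0"

definition calA :: "real^'p^'n \<Rightarrow> real^'p^'p" where
  "calA X = (3/2) *\<^sub>R mat 1 - (1/2) *\<^sub>R (transpose X ** X)"

definition g_of :: "(real^'p^'n \<Rightarrow> real) \<Rightarrow> real^'p^'n \<Rightarrow> real" where
  "g_of f X = f (X ** calA X)"

definition h_of :: "(real^'p^'n \<Rightarrow> real) \<Rightarrow> real \<Rightarrow> real^'p^'n \<Rightarrow> real" where
  "h_of f \<beta> X = g_of f X + \<beta> / 4 * (norm (transpose X ** X - mat 1))\<^sup>2"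

definition spec_norm :: "real^'p^'n \<Rightarrow> real" where
  "spec_norm X = onorm (\<lambda>v. X *v v)"

definition Omega :: "(real^'p^'n) set" where
  "Omega = {X. spec_norm X \<le> 1 + 1/12}"

definition M2 :: "(real^'p^'n \<Rightarrow> real) \<Rightarrow> real" where
  "M2 f = Sup {norm (egrad (g_of f) X - egrad (g_of f) Y) / norm (X - Y) | X Y.
                X \<in> Omega \<and> Y \<in> Omega \<and> X \<noteq> Y}"

definition locally_lipschitz :: "('a::metric_space \<Rightarrow> 'b::metric_space) \<Rightarrow> bool" where
  "locally_lipschitz \<phi> \<longleftrightarrow>
     (\<forall>x. \<exists>r>0. \<exists>L. \<forall>y\<in>ball x r. \<forall>z\<in>ball x r. dist (\<phi> y) (\<phi> z) \<le> L * dist y z)"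

definition is_eigenvalue_on :: "'a::real_vector set \<Rightarrow> ('a \<Rightarrow> 'a) \<Rightarrow> real \<Rightarrow> bool" where
  "is_eigenvalue_on S T l \<longleftrightarrow> (\<exists>v\<in>S. v \<noteq> 0 \<and> T v = l *\<^sub>R v)"

end

theory Submission
  imports Defs
begin


lemma mm_rdistrib: "((A::real^'n^'m) + B) ** C = A ** C + B ** C"
  by (vector matrix_matrix_mult_def sum.distrib[symmetric] field_simps)
lemma mm_ldiff: "(A::real^'n^'m) ** (B - C) = A ** B - A ** C"
  by (vector matrix_matrix_mult_def sum_subtractf[symmetric] field_simps)
lemma mm_rdiff: "((A::real^'n^'m) - B) ** C = A ** C - B ** C"
  by (vector matrix_matrix_mult_def sum_subtractf[symmetric] field_simps)
lemma mm_lminus: "(- (A::real^'n^'m)) ** C = - (A ** C)"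
  by (vector matrix_matrix_mult_def sum_negf[symmetric])
lemma mm_rminus: "(A::real^'n^'m) ** (- C) = - (A ** C)"
  by (vector matrix_matrix_mult_def sum_negf[symmetric])
lemma mm_lscale: "(k *\<^sub>R (A::real^'n^'m)) ** C = k *\<^sub>R (A ** C)"
  by (simp add: scalar_matrix_assoc)
lemma mm_rscale: "(A::real^'n^'m) ** (k *\<^sub>R C) = k *\<^sub>R (A ** C)"
  by (simp add: matrix_scalar_ac scalar_matrix_assoc)
lemma tr_add: "transpose ((A::real^'n^'m) + B) = transpose A + transpose B"
  by (simp add: transpose_def vec_eq_iff)
lemma tr_diff: "transpose ((A::real^'n^'m) - B) = transpose A - transpose B"
  by (simp add: transpose_def vec_eq_iff)
lemma tr_minus: "transpose (- (A::real^'n^'m)) = - transpose A"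
  by (simp add: transpose_def vec_eq_iff)
lemma tr_zero: "transpose (0::real^'n^'m) = 0"
  by (simp add: transpose_def vec_eq_iff)

lemmas mmsimps = matrix_add_ldistrib mm_rdistrib mm_ldiff mm_rdiff mm_lminus mm_rminus
  mm_lscale mm_rscale tr_add tr_diff tr_minus tr_zero transpose_scalar matrix_transpose_mul
  matrix_mul_assoc[symmetric]

lemma swap3a: "(\<Sum>i\<in>A. \<Sum>j\<in>B. \<Sum>k\<in>C. f i j k) = (\<Sum>j\<in>B. \<Sum>k\<in>C. \<Sum>i\<in>A. f i j k)"
  apply (rule trans[OF sum.swap]) apply (rule sum.cong[OF refl]) by (rule sum.swap)
lemma swap3b: "(\<Sum>i\<in>A. \<Sum>j\<in>B. \<Sum>k\<in>C. f i j k) = (\<Sum>i\<in>A. \<Sum>k\<in>C. \<Sum>j\<in>B. f i j k)"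
  apply (rule sum.cong[OF refl]) by (rule sum.swap)

lemma inner_mm: "((A::real^'k^'n) ** B) \<bullet> C = B \<bullet> (transpose A ** C)"
proof -
  have "((A::real^'k^'n) ** B) \<bullet> C = (\<Sum>i\<in>UNIV. \<Sum>l\<in>UNIV. \<Sum>j\<in>UNIV. A$i$j * B$j$l * C$i$l)"
    unfolding inner_vec_def matrix_matrix_mult_def by (simp add: sum_distrib_right)
  also have "\<dots> = (\<Sum>i\<in>UNIV. \<Sum>j\<in>UNIV. \<Sum>l\<in>UNIV. A$i$j * B$j$l * C$i$l)"
    by (rule swap3b)
  also have "\<dots> = (\<Sum>j\<in>UNIV. \<Sum>i\<in>UNIV. \<Sum>l\<in>UNIV. A$i$j * B$j$l * C$i$l)"
    by (rule sum.swap)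
  also have "\<dots> = (\<Sum>j\<in>UNIV. \<Sum>l\<in>UNIV. \<Sum>i\<in>UNIV. A$i$j * B$j$l * C$i$l)"
    by (rule swap3b)
  also have "\<dots> = B \<bullet> (transpose A ** C)"
    unfolding inner_vec_def matrix_matrix_mult_def transpose_def by (simp add: sum_distrib_left mult_ac)
  finally show ?thesis .
qed

lemma inner_mm2: "((A::real^'k^'n) ** B) \<bullet> C = A \<bullet> (C ** transpose B)"
proof -
  have "((A::real^'k^'n) ** B) \<bullet> C = (\<Sum>i\<in>UNIV. \<Sum>l\<in>UNIV. \<Sum>j\<in>UNIV. A$i$j * B$j$l * C$i$l)"
    unfolding inner_vec_def matrix_matrix_mult_def by (simp add: sum_distrib_right)
  also have "\<dots> = (\<Sum>i\<in>UNIV. \<Sum>j\<in>UNIV. \<Sum>l\<in>UNIV. A$i$j * B$j$l * C$i$l)"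
    by (rule swap3b)
  also have "\<dots> = A \<bullet> (C ** transpose B)"
    unfolding inner_vec_def matrix_matrix_mult_def transpose_def by (simp add: sum_distrib_left mult_ac)
  finally show ?thesis .
qed

lemma inner_tr: "transpose (A::real^'k^'n) \<bullet> transpose B = A \<bullet> B"
  unfolding inner_vec_def transpose_def
  by (simp, subst sum.swap, simp)

lemma bilinear_mm: "bounded_bilinear (\<lambda>(A::real^'k^'n) (B::real^'m^'k). A ** B)"
  unfolding bilinear_conv_bounded_bilinear[symmetric] bilinear_def
  by (auto intro!: linearI simp: mmsimps)

lemma bl_tr: "bounded_linear (transpose :: real^'k^'n \<Rightarrow> real^'n^'k)"
  by (rule linear_conv_bounded_linear[THEN iffD1], rule linearI, auto simp: mmsimps)




lemmas hd_mm = bounded_bilinear.FDERIV[OF bilinear_mm]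
lemmas hd_tr = bounded_linear.has_derivative[OF bl_tr]

lemma egrad_eq:
  fixes \<phi> :: "'a::euclidean_space \<Rightarrow> real"
  assumes "(\<phi> has_derivative (\<lambda>v. G \<bullet> v)) (at x)"
  shows "egrad \<phi> x = G"
proof -
  have "frechet_derivative \<phi> (at x) = (\<lambda>v. G \<bullet> v)" using frechet_derivative_at[OF assms] by simp
  moreover have "(\<Sum>b\<in>Basis. (b\<bullet>G) *\<^sub>R b) = (\<Sum>b\<in>Basis. (G\<bullet>b) *\<^sub>R b)"
    by (rule sum.cong) (auto simp: inner_commute)
  ultimately show ?thesis unfolding egrad_def by (simp add: euclidean_representation)
qed

lemma egrad_deriv:
  fixes \<phi> :: "'a::euclidean_space \<Rightarrow> real"
  assumes "\<phi> differentiable (at x)"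
  shows "(\<phi> has_derivative (\<lambda>v. egrad \<phi> x \<bullet> v)) (at x)"
proof -
  let ?D = "frechet_derivative \<phi> (at x)"
  have d: "(\<phi> has_derivative ?D) (at x)" using assms frechet_derivative_works by blast
  then have lin: "linear ?D" using has_derivative_linear by blast
  have "?D v = egrad \<phi> x \<bullet> v" for v
  proof -
    have "?D v = ?D (\<Sum>b\<in>Basis. (v \<bullet> b) *\<^sub>R b)" by (simp add: euclidean_representation)
    also have "\<dots> = (\<Sum>b\<in>Basis. (v \<bullet> b) * ?D b)" using lin by (simp add: linear_sum linear_scale)
    also have "\<dots> = (\<Sum>b\<in>Basis. (b \<bullet> v) * ?D b)" by (simp add: inner_commute)
    also have "\<dots> = egrad \<phi> x \<bullet> v" unfolding egrad_def
      by (simp add: inner_sum_left mult.commute)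
    finally show ?thesis .
  qed
  then have "?D = (\<lambda>v. egrad \<phi> x \<bullet> v)" by auto
  with d show ?thesis by simp
qed

definition Psi :: "real^'p^'n \<Rightarrow> real^'p^'n" where
  "Psi Y = (3/2) *\<^sub>R Y - (1/2) *\<^sub>R (Y ** (transpose Y ** Y))"

definition Jst :: "real^'p^'n \<Rightarrow> real^'p^'n \<Rightarrow> real^'p^'n" where
  "Jst Y G = (3/2) *\<^sub>R G - (1/2) *\<^sub>R (G ** (transpose Y ** Y) + Y ** (transpose G ** Y) + Y ** (transpose Y ** G))"

lemma Psi_alt: "Y ** calA Y = Psi Y"
  unfolding calA_def Psi_def by (simp add: mmsimps)

lemma Psi_deriv: "(Psi has_derivative Jst Y) (at Y)"
proof -
  have "((\<lambda>Y. (3/2) *\<^sub>R Y - (1/2) *\<^sub>R (Y ** (transpose Y ** Y))) has_derivative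
     (\<lambda>E. (3/2) *\<^sub>R E - (1/2) *\<^sub>R (Y ** (transpose Y ** E + transpose E ** Y) + E ** (transpose Y ** Y)))) (at Y)"
    by (intro has_derivative_diff has_derivative_scaleR_right hd_mm hd_tr has_derivative_ident)
  then show ?thesis unfolding Psi_def[abs_def]
    by (rule has_derivative_eq_rhs) (auto simp: Jst_def fun_eq_iff mmsimps algebra_simps)
qed

lemma Jst_adj: "Jst Y G \<bullet> E = G \<bullet> Jst Y E"
proof -
  have 1: "(G ** (transpose Y ** Y)) \<bullet> E = G \<bullet> (E ** (transpose Y ** Y))"
    by (simp add: inner_mm2 matrix_transpose_mul)
  have 2: "(Y ** (transpose G ** Y)) \<bullet> E = G \<bullet> (Y ** (transpose E ** Y))"
  proof -
    have "(Y ** (transpose G ** Y)) \<bullet> E = (transpose G ** Y) \<bullet> (transpose Y ** E)" by (simp add: inner_mm)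
    also have "\<dots> = transpose G \<bullet> (transpose Y ** E ** transpose Y)" by (simp add: inner_mm2)
    also have "\<dots> = G \<bullet> transpose (transpose Y ** E ** transpose Y)"
      by (metis inner_tr transpose_transpose)
    also have "\<dots> = G \<bullet> (Y ** (transpose E ** Y))" by (simp add: matrix_transpose_mul matrix_mul_assoc)
    finally show ?thesis .
  qed
  have 3: "(Y ** (transpose Y ** G)) \<bullet> E = G \<bullet> (Y ** (transpose Y ** E))"
    using inner_mm[of "Y ** transpose Y" G E] by (simp add: matrix_transpose_mul matrix_mul_assoc)
  show ?thesis unfolding Jst_def
    by (simp add: inner_diff_left inner_add_left inner_diff_right inner_add_right 1 2 3)
qed

lemma g_deriv:
  assumes "\<forall>Y. f differentiable (at Y)"
  shows "(g_of f has_derivative (\<lambda>E. Jst Y (egrad f (Psi Y)) \<bullet> E)) (at Y)"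
proof -
  have "((\<lambda>Y. f (Psi Y)) has_derivative (\<lambda>E. egrad f (Psi Y) \<bullet> Jst Y E)) (at Y)"
    by (rule has_derivative_compose[OF Psi_deriv egrad_deriv]) (use assms in auto)
  then show ?thesis unfolding g_of_def[abs_def] Psi_alt
    by (rule has_derivative_eq_rhs) (simp add: Jst_adj fun_eq_iff)
qed

definition pen :: "real \<Rightarrow> real^'p^'n \<Rightarrow> real" where
  "pen \<beta> Y = \<beta> / 4 * (norm (transpose Y ** Y - mat 1))\<^sup>2"

lemma pen_deriv:
  "(pen \<beta> has_derivative (\<lambda>E. (\<beta> *\<^sub>R (Y ** (transpose Y ** Y - mat 1))) \<bullet> E)) (at Y)"
proof -
  let ?M = "transpose Y ** Y - mat 1"
  have dM: "((\<lambda>x. transpose x ** x - mat 1) has_derivative (\<lambda>h. transpose Y ** h + transpose h ** Y)) (at Y)"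
    by (rule has_derivative_eq_rhs[OF has_derivative_diff[OF hd_mm[OF hd_tr[OF has_derivative_ident] has_derivative_ident] has_derivative_const]]) simp
  have sym: "transpose ?M = ?M" by (simp add: mmsimps)
  have "((\<lambda>Y. \<beta> / 4 * ((transpose Y ** Y - mat 1) \<bullet> (transpose Y ** Y - mat 1))) has_derivative
     (\<lambda>E. \<beta> / 4 * (?M \<bullet> (transpose Y ** E + transpose E ** Y) + (transpose Y ** E + transpose E ** Y) \<bullet> ?M))) (at Y)"
    by (intro has_derivative_mult_right has_derivative_inner dM)
  moreover have "(transpose Y ** E) \<bullet> ?M = E \<bullet> (Y ** ?M)" for E by (simp add: inner_mm)
  moreover have "(transpose E ** Y) \<bullet> ?M = E \<bullet> (Y ** ?M)" for E
  proof -
    have "(transpose E ** Y) \<bullet> ?M = transpose E \<bullet> (?M ** transpose Y)" by (simp add: inner_mm2)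
    also have "\<dots> = E \<bullet> transpose (?M ** transpose Y)" by (metis inner_tr transpose_transpose)
    also have "\<dots> = E \<bullet> (Y ** ?M)" by (simp only: matrix_transpose_mul sym transpose_transpose)
    finally show ?thesis .
  qed
  ultimately show ?thesis unfolding pen_def[abs_def] power2_norm_eq_inner
    by (elim has_derivative_eq_rhs) (auto simp: fun_eq_iff inner_add_left inner_add_right inner_commute algebra_simps)
qed

lemma h_eq: "h_of f \<beta> = (\<lambda>Y. g_of f Y + pen \<beta> Y)"
  by (simp add: h_of_def pen_def fun_eq_iff)

lemma egrad_h:
  assumes "\<forall>Y. f differentiable (at Y)"
  shows "egrad (h_of f \<beta>) Y = Jst Y (egrad f (Psi Y)) + \<beta> *\<^sub>R (Y ** (transpose Y ** Y - mat 1))"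
  unfolding h_eq
  by (rule egrad_eq, rule has_derivative_eq_rhs, rule has_derivative_add[OF g_deriv[OF assms] pen_deriv])
     (simp add: inner_add_left)

lemma egrad_g:
  assumes "\<forall>Y. f differentiable (at Y)"
  shows "egrad (g_of f) Y = Jst Y (egrad f (Psi Y))"
  by (rule egrad_eq, rule g_deriv[OF assms])




definition Jd :: "real^'p^'n \<Rightarrow> real^'p^'n \<Rightarrow> real^'p^'n \<Rightarrow> real^'p^'n" where
  "Jd Y E G = -(1/2) *\<^sub>R (G ** (transpose E ** Y + transpose Y ** E) + E ** (transpose G ** Y)
      + Y ** (transpose G ** E) + E ** (transpose Y ** G) + Y ** (transpose E ** G))"

lemma Jst_deriv:
  assumes F: "(F has_derivative F') (at Y)"
  shows "((\<lambda>Y. Jst Y (F Y)) has_derivative (\<lambda>E. Jst Y (F' E) + Jd Y E (F Y))) (at Y)"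
proof -
  have "((\<lambda>Y. (3/2) *\<^sub>R F Y - (1/2) *\<^sub>R (F Y ** (transpose Y ** Y) + Y ** (transpose (F Y) ** Y) + Y ** (transpose Y ** F Y)))
     has_derivative (\<lambda>h. (3/2) *\<^sub>R F' h - (1/2) *\<^sub>R ( (F Y ** (transpose Y ** h + transpose h ** Y) + F' h ** (transpose Y ** Y))
        + (Y ** (transpose (F Y) ** h + transpose (F' h) ** Y) + h ** (transpose (F Y) ** Y))
        + (Y ** (transpose Y ** F' h + transpose h ** F Y) + h ** (transpose Y ** F Y))))) (at Y)"
    by (intro has_derivative_diff has_derivative_scaleR_right has_derivative_add hd_mm hd_tr has_derivative_ident F)
  then show ?thesis unfolding Jst_def
    by (rule has_derivative_eq_rhs) (simp add: fun_eq_iff Jd_def mmsimps algebra_simps)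
qed

lemma pengrad_deriv:
  fixes Y :: "real^'p^'n"
  shows "((\<lambda>Y. \<beta> *\<^sub>R (Y ** (transpose Y ** Y - mat 1))) has_derivative
     (\<lambda>E. \<beta> *\<^sub>R (E ** (transpose Y ** Y - mat 1) + Y ** (transpose Y ** E + transpose E ** Y)))) (at Y)"
proof -
  have dM: "((\<lambda>x::real^'p^'n. transpose x ** x - mat 1) has_derivative (\<lambda>h. transpose Y ** h + transpose h ** Y)) (at Y)"
    by (rule has_derivative_eq_rhs[OF has_derivative_diff[OF hd_mm[OF hd_tr[OF has_derivative_ident] has_derivative_ident] has_derivative_const]]) simp
  have "((\<lambda>Y. \<beta> *\<^sub>R (Y ** (transpose Y ** Y - mat 1))) has_derivative
     (\<lambda>h. \<beta> *\<^sub>R (Y ** (transpose Y ** h + transpose h ** Y) + h ** (transpose Y ** Y - mat 1)))) (at Y)"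
    by (rule has_derivative_scaleR_right[OF hd_mm[OF has_derivative_ident dM]])
  then show ?thesis by (rule has_derivative_eq_rhs) (simp add: fun_eq_iff algebra_simps)
qed

lemma egrad_h_deriv:
  assumes fd: "\<forall>Y. f differentiable (at Y)" and gd: "\<forall>Y. egrad f differentiable (at Y)"
  shows "(egrad (h_of f \<beta>) has_derivative (\<lambda>E. Jst Y (ehess f (Psi Y) (Jst Y E)) + Jd Y E (egrad f (Psi Y))
      + \<beta> *\<^sub>R (E ** (transpose Y ** Y - mat 1) + Y ** (transpose Y ** E + transpose E ** Y)))) (at Y)"
proof -
  have e: "egrad (h_of f \<beta>) = (\<lambda>Y. Jst Y (egrad f (Psi Y)) + \<beta> *\<^sub>R (Y ** (transpose Y ** Y - mat 1)))"
    using egrad_h[OF fd] by auto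
  have c: "((\<lambda>Y. egrad f (Psi Y)) has_derivative (\<lambda>E. ehess f (Psi Y) (Jst Y E))) (at Y)"
    unfolding ehess_def
    by (rule has_derivative_compose[OF Psi_deriv]) (use gd frechet_derivative_works in blast)
  show ?thesis unfolding e
    by (rule has_derivative_add[OF Jst_deriv[OF c] pengrad_deriv])
qed

lemma egrad_g_deriv:
  assumes fd: "\<forall>Y. f differentiable (at Y)" and gd: "\<forall>Y. egrad f differentiable (at Y)"
  shows "(egrad (g_of f) has_derivative (\<lambda>E. Jst Y (ehess f (Psi Y) (Jst Y E)) + Jd Y E (egrad f (Psi Y)))) (at Y)"
proof -
  have e: "egrad (g_of f) = (\<lambda>Y. Jst Y (egrad f (Psi Y)))"
    using egrad_g[OF fd] by auto
  have c: "((\<lambda>Y. egrad f (Psi Y)) has_derivative (\<lambda>E. ehess f (Psi Y) (Jst Y E))) (at Y)"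
    unfolding ehess_def
    by (rule has_derivative_compose[OF Psi_deriv]) (use gd frechet_derivative_works in blast)
  show ?thesis unfolding e by (rule Jst_deriv[OF c])
qed

section \<open>Algebra at a Stiefel point\<close>

lemma r1: "transpose X ** X = mat 1 \<Longrightarrow> transpose X ** (X ** Z) = Z"
  by (simp add: matrix_mul_assoc)

lemma Psi_X: "transpose X ** X = mat 1 \<Longrightarrow> Psi X = X"
  unfolding Psi_def by (simp add: scaleR_left_diff_distrib[symmetric])

lemma Jst_X: "transpose X ** X = mat 1 \<Longrightarrow> Jst X W = proj_tangent X W"
  unfolding Jst_def proj_tangent_def sym_part_def
  by (simp add: mmsimps algebra_simps, simp add: vec_eq_iff algebra_simps)

lemma proj_lin: "proj_tangent X (A - B) = proj_tangent X A - proj_tangent X B"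
  "proj_tangent X (A + B) = proj_tangent X A + proj_tangent X B"
  "proj_tangent X (c *\<^sub>R A) = c *\<^sub>R proj_tangent X A"
  unfolding proj_tangent_def sym_part_def by (simp_all add: mmsimps algebra_simps)

lemma tangent_iff: "D \<in> tangent_space X \<longleftrightarrow> transpose D ** X = - (transpose X ** D)"
proof -
  have "D \<in> tangent_space X \<longleftrightarrow> transpose D ** X + transpose X ** D = 0"
    unfolding tangent_space_def sym_part_def by (simp add: matrix_transpose_mul)
  then show ?thesis by (simp only: eq_neg_iff_add_eq_0)
qed

lemma r2: "transpose (D::real^'p^'n) ** X = - (transpose X ** D) \<Longrightarrow> transpose D ** (X ** Z) = - (transpose X ** (D ** Z))"
proof -
  assume a: "transpose D ** X = - (transpose X ** D)"
  have "transpose D ** (X ** Z) = (transpose D ** X) ** Z" by (simp add: matrix_mul_assoc)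
  also have "\<dots> = (- (transpose X ** D)) ** Z" using a by simp
  also have "\<dots> = - (transpose X ** (D ** Z))" by (simp only: mm_lminus matrix_mul_assoc)
  finally show ?thesis .
qed

lemma proj_sym: "transpose X ** X = mat 1 \<Longrightarrow> transpose M = M \<Longrightarrow> proj_tangent X (X ** M) = 0"
  unfolding proj_tangent_def sym_part_def by (simp add: r1)

lemma Jst_normal: "transpose X ** X = mat 1 \<Longrightarrow> transpose W = W \<Longrightarrow> Jst X (X ** W) = 0"
  by (simp add: Jst_X proj_sym)




lemma ehess_tangent_alg:
  fixes X D :: "real^'p^'n"
  assumes XtX: "transpose X ** X = mat 1" and S: "transpose S = S"
    and D: "transpose D ** X = - (transpose X ** D)"
  shows "Jd X D (X ** S) + \<beta> *\<^sub>R (D ** (transpose X ** X - mat 1) + X ** (transpose X ** D + transpose D ** X))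
     = - proj_tangent X (D ** S)"
proof -
  have p: "\<beta> *\<^sub>R (D ** (transpose X ** X - mat 1) + X ** (transpose X ** D + transpose D ** X)) = 0"
    by (simp add: XtX D)
  have "Jd X D (X ** S) = - proj_tangent X (D ** S)"
    unfolding Jd_def proj_tangent_def sym_part_def
    by (simp add: mmsimps r1[OF XtX] r2[OF D] D S XtX algebra_simps, simp add: vec_eq_iff algebra_simps)
  with p show ?thesis by simp
qed

lemma vtimes2: "(W::real^'k^'m) * 2 = 2 *\<^sub>R W"
  by (simp add: vec_eq_iff)

lemma ehess_normal_alg:
  fixes X :: "real^'p^'n"
  assumes XtX: "transpose X ** X = mat 1" and S: "transpose S = S" and W: "transpose W = W"
  shows "Jd X (X ** W) (X ** S) + \<beta> *\<^sub>R ((X ** W) ** (transpose X ** X - mat 1) + X ** (transpose X ** (X ** W) + transpose (X ** W) ** X))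
     = X ** ((2 * \<beta>) *\<^sub>R W - (3/2) *\<^sub>R (S ** W + W ** S))"
  unfolding Jd_def
  by (simp add: mmsimps r1[OF XtX] XtX S W algebra_simps vtimes2, simp add: vec_eq_iff algebra_simps)




lemma LL_unfold:
  fixes \<phi> :: "'a::real_normed_vector \<Rightarrow> 'b::real_normed_vector"
  assumes "locally_lipschitz \<phi>"
  obtains r L B where "r > 0" "L \<ge> 0" "\<And>y z. y \<in> ball x r \<Longrightarrow> z \<in> ball x r \<Longrightarrow> norm (\<phi> y - \<phi> z) \<le> L * norm (y - z)"
    "\<And>y. y \<in> ball x r \<Longrightarrow> norm (\<phi> y) \<le> B"
proof -
  obtain r L where r: "r > 0" and L: "\<forall>y\<in>ball x r. \<forall>z\<in>ball x r. dist (\<phi> y) (\<phi> z) \<le> L * dist y z"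
    using assms unfolding locally_lipschitz_def by blast
  define L' where "L' = max L 0"
  have L': "norm (\<phi> y - \<phi> z) \<le> L' * norm (y - z)" if "y \<in> ball x r" "z \<in> ball x r" for y z
  proof -
    have "norm (\<phi> y - \<phi> z) \<le> L * norm (y - z)" using L that by (simp add: dist_norm)
    also have "\<dots> \<le> L' * norm (y - z)" unfolding L'_def by (intro mult_right_mono) auto
    finally show ?thesis .
  qed
  have B: "norm (\<phi> y) \<le> norm (\<phi> x) + L' * r" if "y \<in> ball x r" for y
  proof -
    have "norm (\<phi> y) \<le> norm (\<phi> x) + norm (\<phi> y - \<phi> x)" by (metis norm_triangle_sub add.commute)
    also have "norm (\<phi> y - \<phi> x) \<le> L' * norm (y - x)" using L' that r by auto
    also have "\<dots> \<le> L' * r" using that unfolding L'_def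
      by (intro mult_left_mono) (auto simp: dist_norm norm_minus_commute)
    finally show ?thesis by simp
  qed
  show ?thesis by (rule that[OF r _ L' B]) (auto simp: L'_def)
qed

lemma LL_unfold_ex:
  fixes \<phi> :: "'a::real_normed_vector \<Rightarrow> 'b::real_normed_vector"
  assumes "locally_lipschitz \<phi>"
  shows "\<exists>r L B. r > 0 \<and> L \<ge> 0 \<and> (\<forall>y z. y \<in> ball x r \<longrightarrow> z \<in> ball x r \<longrightarrow> norm (\<phi> y - \<phi> z) \<le> L * norm (y - z))
    \<and> (\<forall>y. y \<in> ball x r \<longrightarrow> norm (\<phi> y) \<le> B)"
proof -
  obtain r L B where "r > 0" "L \<ge> 0" "\<And>y z. y \<in> ball x r \<Longrightarrow> z \<in> ball x r \<Longrightarrow> norm (\<phi> y - \<phi> z) \<le> L * norm (y - z)"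
    "\<And>y. y \<in> ball x r \<Longrightarrow> norm (\<phi> y) \<le> B"
    using LL_unfold[OF assms, of x] by blast
  then show ?thesis by blast
qed

lemma LL_intro:
  fixes \<phi> :: "'a::real_normed_vector \<Rightarrow> 'b::real_normed_vector"
  assumes "\<And>x. \<exists>r>0. \<exists>L. \<forall>y\<in>ball x r. \<forall>z\<in>ball x r. norm (\<phi> y - \<phi> z) \<le> L * norm (y - z)"
  shows "locally_lipschitz \<phi>"
  using assms unfolding locally_lipschitz_def by (simp add: dist_norm)

lemma LL_const: "locally_lipschitz (\<lambda>x::'a::real_normed_vector. c::'b::real_normed_vector)"
  by (rule LL_intro) (auto intro!: exI[of _ 1])

lemma LL_id: "locally_lipschitz (\<lambda>x::'a::real_normed_vector. x)"
  by (rule LL_intro) (auto intro!: exI[of _ 1])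

lemma LL_add:
  fixes \<phi> \<psi> :: "'a::real_normed_vector \<Rightarrow> 'b::real_normed_vector"
  assumes "locally_lipschitz \<phi>" "locally_lipschitz \<psi>"
  shows "locally_lipschitz (\<lambda>x. \<phi> x + \<psi> x)"
proof (rule LL_intro)
  fix x
  obtain r1 L1 B1 where r1: "r1 > 0" "L1 \<ge> 0" "\<forall>y z. y \<in> ball x r1 \<longrightarrow> z \<in> ball x r1 \<longrightarrow> norm (\<phi> y - \<phi> z) \<le> L1 * norm (y - z)"
    "\<forall>y. y \<in> ball x r1 \<longrightarrow> norm (\<phi> y) \<le> B1"
    using LL_unfold_ex[OF assms(1), of x] by blast
  obtain r2 L2 B2 where r2: "r2 > 0" "L2 \<ge> 0" "\<forall>y z. y \<in> ball x r2 \<longrightarrow> z \<in> ball x r2 \<longrightarrow> norm (\<psi> y - \<psi> z) \<le> L2 * norm (y - z)"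
    "\<forall>y. y \<in> ball x r2 \<longrightarrow> norm (\<psi> y) \<le> B2"
    using LL_unfold_ex[OF assms(2), of x] by blast
  have key: "\<forall>y\<in>ball x (min r1 r2). \<forall>z\<in>ball x (min r1 r2). norm (\<phi> y + \<psi> y - (\<phi> z + \<psi> z)) \<le> (L1 + L2) * norm (y - z)"
  proof (intro ballI)
    fix y z assume y: "y \<in> ball x (min r1 r2)" and z: "z \<in> ball x (min r1 r2)"
    have "norm (\<phi> y + \<psi> y - (\<phi> z + \<psi> z)) \<le> norm (\<phi> y - \<phi> z) + norm (\<psi> y - \<psi> z)"
      by (metis add_diff_add norm_triangle_ineq)
    also have "\<dots> \<le> L1 * norm (y - z) + L2 * norm (y - z)"
      using r1(3) r2(3) y z by (intro add_mono) auto
    finally show "norm (\<phi> y + \<psi> y - (\<phi> z + \<psi> z)) \<le> (L1 + L2) * norm (y - z)" by (simp add: algebra_simps)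
  qed
  have Rpos: "min r1 r2 > 0" using r1 r2 by auto
  show "\<exists>r>0. \<exists>L. \<forall>y\<in>ball x r. \<forall>z\<in>ball x r. norm (\<phi> y + \<psi> y - (\<phi> z + \<psi> z)) \<le> L * norm (y - z)" using key Rpos by blast
qed

lemma LL_comp:
  fixes \<phi> :: "'b::real_normed_vector \<Rightarrow> 'c::real_normed_vector" and \<psi> :: "'a::real_normed_vector \<Rightarrow> 'b"
  assumes "locally_lipschitz \<phi>" "locally_lipschitz \<psi>"
  shows "locally_lipschitz (\<lambda>x. \<phi> (\<psi> x))"
proof (rule LL_intro)
  fix x
  obtain r1 L1 B1 where r1: "r1 > 0" "L1 \<ge> 0" "\<forall>y z. y \<in> ball (\<psi> x) r1 \<longrightarrow> z \<in> ball (\<psi> x) r1 \<longrightarrow> norm (\<phi> y - \<phi> z) \<le> L1 * norm (y - z)"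
    "\<forall>y. y \<in> ball (\<psi> x) r1 \<longrightarrow> norm (\<phi> y) \<le> B1"
    using LL_unfold_ex[OF assms(1), of "\<psi> x"] by blast
  obtain r2 L2 B2 where r2: "r2 > 0" "L2 \<ge> 0" "\<forall>y z. y \<in> ball x r2 \<longrightarrow> z \<in> ball x r2 \<longrightarrow> norm (\<psi> y - \<psi> z) \<le> L2 * norm (y - z)"
    "\<forall>y. y \<in> ball x r2 \<longrightarrow> norm (\<psi> y) \<le> B2"
    using LL_unfold_ex[OF assms(2), of x] by blast
  define r where "r = min r2 (r1 / (L2 + 1))"
  have r: "r > 0" unfolding r_def using r1 r2 by auto
  have inb: "\<psi> y \<in> ball (\<psi> x) r1" if y: "y \<in> ball x r" for y
  proof -
    have yr2: "y \<in> ball x r2" using y unfolding r_def by auto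
    have "norm (\<psi> x - \<psi> y) \<le> L2 * norm (x - y)" using r2(3) yr2 r2(1) by auto
    also have "\<dots> \<le> L2 * r" using y r2(2) by (intro mult_left_mono) (auto simp: dist_norm)
    also have "\<dots> < r1"
    proof -
      have "r \<le> r1 / (L2 + 1)" unfolding r_def by simp
      then have "r * (L2 + 1) \<le> r1" using r2(2) by (simp add: le_divide_eq)
      then show ?thesis using r by (simp add: algebra_simps)
    qed
    finally show ?thesis by (simp add: dist_norm)
  qed
  have key: "\<forall>y\<in>ball x (r). \<forall>z\<in>ball x (r). norm (\<phi> (\<psi> y) - \<phi> (\<psi> z)) \<le> (L1 * L2) * norm (y - z)"
  proof (intro ballI)
    fix y z assume y: "y \<in> ball x r" and z: "z \<in> ball x r"
    have "norm (\<phi> (\<psi> y) - \<phi> (\<psi> z)) \<le> L1 * norm (\<psi> y - \<psi> z)" using r1(3) inb y z by auto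
    also have "\<dots> \<le> L1 * (L2 * norm (y - z))"
      using r2(3) y z r1(2) unfolding r_def by (intro mult_left_mono) auto
    finally show "norm (\<phi> (\<psi> y) - \<phi> (\<psi> z)) \<le> L1 * L2 * norm (y - z)" by (simp add: mult.assoc)
  qed
  have Rpos: "r > 0" using r by auto
  show "\<exists>r>0. \<exists>L. \<forall>y\<in>ball x r. \<forall>z\<in>ball x r. norm (\<phi> (\<psi> y) - \<phi> (\<psi> z)) \<le> L * norm (y - z)" using key Rpos by blast
qed

lemma LL_bilinear:
  fixes \<phi> :: "'a::real_normed_vector \<Rightarrow> 'b::real_normed_vector" and \<psi> :: "'a \<Rightarrow> 'c::real_normed_vector"
  assumes b: "bounded_bilinear b" and "locally_lipschitz \<phi>" "locally_lipschitz \<psi>"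
  shows "locally_lipschitz (\<lambda>x. b (\<phi> x) (\<psi> x) :: 'd::real_normed_vector)"
proof (rule LL_intro)
  fix x
  obtain K where K: "K > 0" "\<And>a c. norm (b a c) \<le> norm a * norm c * K"
    using bounded_bilinear.pos_bounded[OF b] by blast
  obtain r1 L1 B1 where r1: "r1 > 0" "L1 \<ge> 0" "\<forall>y z. y \<in> ball x r1 \<longrightarrow> z \<in> ball x r1 \<longrightarrow> norm (\<phi> y - \<phi> z) \<le> L1 * norm (y - z)"
    "\<forall>y. y \<in> ball x r1 \<longrightarrow> norm (\<phi> y) \<le> B1"
    using LL_unfold_ex[OF assms(2), of x] by blast
  obtain r2 L2 B2 where r2: "r2 > 0" "L2 \<ge> 0" "\<forall>y z. y \<in> ball x r2 \<longrightarrow> z \<in> ball x r2 \<longrightarrow> norm (\<psi> y - \<psi> z) \<le> L2 * norm (y - z)"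
    "\<forall>y. y \<in> ball x r2 \<longrightarrow> norm (\<psi> y) \<le> B2"
    using LL_unfold_ex[OF assms(3), of x] by blast
  have "norm (\<phi> x) \<le> B1" using r1(4) r1(1) by simp
  then have B1: "B1 \<ge> 0" using norm_ge_zero[of "\<phi> x"] by linarith
  have "norm (\<psi> x) \<le> B2" using r2(4) r2(1) by simp
  then have B2: "B2 \<ge> 0" using norm_ge_zero[of "\<psi> x"] by linarith
  have key: "\<forall>y\<in>ball x (min r1 r2). \<forall>z\<in>ball x (min r1 r2). norm (b (\<phi> y) (\<psi> y) - b (\<phi> z) (\<psi> z)) \<le> (K * (L1 * B2 + B1 * L2)) * norm (y - z)"
  proof (intro ballI)
    fix y z assume y: "y \<in> ball x (min r1 r2)" and z: "z \<in> ball x (min r1 r2)"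
    have eq: "b (\<phi> y) (\<psi> y) - b (\<phi> z) (\<psi> z) = b (\<phi> y - \<phi> z) (\<psi> y) + b (\<phi> z) (\<psi> y - \<psi> z)"
      by (simp add: bounded_bilinear.diff_left[OF b] bounded_bilinear.diff_right[OF b])
    have "norm (b (\<phi> y) (\<psi> y) - b (\<phi> z) (\<psi> z)) \<le> norm (b (\<phi> y - \<phi> z) (\<psi> y)) + norm (b (\<phi> z) (\<psi> y - \<psi> z))"
      unfolding eq by (rule norm_triangle_ineq)
    also have "\<dots> \<le> norm (\<phi> y - \<phi> z) * norm (\<psi> y) * K + norm (\<phi> z) * norm (\<psi> y - \<psi> z) * K"
      by (intro add_mono K(2))
    also have "\<dots> \<le> (L1 * norm (y - z)) * B2 * K + B1 * (L2 * norm (y - z)) * K"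
      using y z r1 r2 K(1) B1 B2 by (intro add_mono mult_right_mono mult_mono) auto
    finally show "norm (b (\<phi> y) (\<psi> y) - b (\<phi> z) (\<psi> z)) \<le> K * (L1 * B2 + B1 * L2) * norm (y - z)"
      by (simp add: algebra_simps)
  qed
  have Rpos: "min r1 r2 > 0" using r1 r2 by auto
  show "\<exists>r>0. \<exists>L. \<forall>y\<in>ball x r. \<forall>z\<in>ball x r. norm (b (\<phi> y) (\<psi> y) - b (\<phi> z) (\<psi> z)) \<le> L * norm (y - z)" using key Rpos by blast
qed

lemma LL_bl: "bounded_linear T \<Longrightarrow> locally_lipschitz (T :: 'a::real_normed_vector \<Rightarrow> 'b::real_normed_vector)"
proof (rule LL_intro)
  fix x assume T: "bounded_linear T"
  obtain K where K: "\<And>a. norm (T a) \<le> norm a * K" using bounded_linear.bounded[OF T] by blast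
  show "\<exists>r>0. \<exists>L. \<forall>y\<in>ball x r. \<forall>z\<in>ball x r. norm (T y - T z) \<le> L * norm (y - z)"
  proof -
    have "norm (T y - T z) \<le> K * norm (y - z)" for y z
    proof -
      have "T y - T z = T (y - z)" by (simp add: linear_diff[OF bounded_linear.linear[OF T]])
      then have "norm (T y - T z) \<le> norm (y - z) * K" using K by simp
      then show ?thesis by (simp add: mult.commute)
    qed
    then have "\<forall>y\<in>ball x 1. \<forall>z\<in>ball x 1. norm (T y - T z) \<le> K * norm (y - z)" by blast
    then show ?thesis by (intro exI[of _ "1::real"]) auto
  qed
qed

lemma LL_scale: "locally_lipschitz \<phi> \<Longrightarrow> locally_lipschitz (\<lambda>x::'a::real_normed_vector. c *\<^sub>R (\<phi> x :: 'b::real_normed_vector))"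
  by (rule LL_comp[OF LL_bl[OF bounded_linear_scaleR_right]])

lemma LL_diff:
  fixes \<phi> \<psi> :: "'a::real_normed_vector \<Rightarrow> 'b::real_normed_vector"
  assumes "locally_lipschitz \<phi>" "locally_lipschitz \<psi>"
  shows "locally_lipschitz (\<lambda>x. \<phi> x - \<psi> x)"
  using LL_add[OF assms(1) LL_scale[OF assms(2), of "-1"]] by simp

lemma LL_tr: "locally_lipschitz \<phi> \<Longrightarrow> locally_lipschitz (\<lambda>x::'a::real_normed_vector. transpose (\<phi> x :: real^'k^'m))"
  by (rule LL_comp[OF LL_bl[OF bl_tr]])

lemma LL_mm: "locally_lipschitz \<phi> \<Longrightarrow> locally_lipschitz \<psi> \<Longrightarrow>
   locally_lipschitz (\<lambda>x::'a::real_normed_vector. (\<phi> x :: real^'k^'m) ** (\<psi> x :: real^'j^'k))"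
  by (rule LL_bilinear[OF bilinear_mm])

lemma LL_egrad_g:
  fixes f :: "real^'p^'n \<Rightarrow> real"
  assumes fd: "\<forall>Y. f differentiable (at Y)" and L: "locally_lipschitz (egrad f)"
  shows "locally_lipschitz (egrad (g_of f))"
proof -
  have Psi: "locally_lipschitz (Psi :: real^'p^'n \<Rightarrow> _)"
    unfolding Psi_def[abs_def]
    by (intro LL_diff LL_scale LL_mm LL_tr LL_id)
  have EP: "locally_lipschitz (\<lambda>Y. egrad f (Psi Y))" by (rule LL_comp[OF L Psi])
  have e: "egrad (g_of f) = (\<lambda>Y. Jst Y (egrad f (Psi Y)))" using egrad_g[OF fd] by auto
  show ?thesis unfolding e Jst_def
    by (intro LL_diff LL_add LL_scale LL_mm LL_tr LL_id EP)
qed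




lemma spec_norm_le_norm:
  fixes A :: "real^'p^'n"
  shows "spec_norm A \<le> real CARD('n) * real CARD('p) * norm A"
  unfolding spec_norm_def
proof (rule onorm_le_matrix_component)
  fix i j
  have "\<bar>A $ i $ j\<bar> \<le> norm (A $ i)" by (rule component_le_norm_cart)
  also have "\<dots> \<le> norm A" by (rule Finite_Cartesian_Product.norm_nth_le)
  finally show "\<bar>A $ i $ j\<bar> \<le> norm A" .
qed

lemma norm_le_spec:
  fixes A :: "real^'p^'n"
  shows "norm A \<le> real CARD('n) * real CARD('p) * spec_norm A"
proof -
  have "norm A \<le> (\<Sum>i\<in>UNIV. norm (A $ i))"
    unfolding norm_vec_def by (rule L2_set_le_sum) simp
  also have "\<dots> \<le> (\<Sum>i\<in>(UNIV::'n set). \<Sum>j\<in>(UNIV::'p set). spec_norm A)"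
  proof (rule sum_mono)
    fix i
    have "norm (A $ i) \<le> (\<Sum>j\<in>UNIV. \<bar>A $ i $ j\<bar>)" by (rule norm_le_l1_cart)
    also have "\<dots> \<le> (\<Sum>j\<in>(UNIV::'p set). spec_norm A)"
      unfolding spec_norm_def by (rule sum_mono) (rule matrix_component_le_onorm)
    finally show "norm (A $ i) \<le> (\<Sum>j\<in>(UNIV::'p set). spec_norm A)" .
  qed
  also have "\<dots> = real CARD('n) * real CARD('p) * spec_norm A" by simp
  finally show ?thesis .
qed

lemma spec_norm_triangle:
  fixes A B :: "real^'p^'n"
  shows "spec_norm (A + B) \<le> spec_norm A + spec_norm B"
  unfolding spec_norm_def matrix_vector_mult_add_rdistrib
  by (rule onorm_triangle) auto

lemma spec_norm_X:
  fixes X :: "real^'p^'n"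
  assumes XtX: "transpose X ** X = mat 1"
  shows "spec_norm X \<le> 1"
  unfolding spec_norm_def
proof (rule onorm_le)
  fix w :: "real^'p"
  have "(X *v w) \<bullet> (X *v w) = w \<bullet> w"
  proof -
    have "(X *v w) \<bullet> (X *v w) = (w v* transpose X) \<bullet> (X *v w)" by simp
    also have "\<dots> = w \<bullet> (transpose X *v (X *v w))" by (rule dot_lmul_matrix)
    also have "\<dots> = w \<bullet> w" by (simp add: matrix_vector_mul_assoc XtX)
    finally show ?thesis .
  qed
  then have "norm (X *v w) = norm w" by (simp add: norm_eq_sqrt_inner)
  then show "norm (X *v w) \<le> 1 * norm w" by simp
qed

lemma lipschitz_on_cball:
  fixes \<phi> :: "real^'p^'n \<Rightarrow> real^'p^'n"
  assumes "locally_lipschitz \<phi>"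
  obtains L where "L-lipschitz_on (cball 0 R) \<phi>"
proof -
  have ll: "local_lipschitz {0::real} (cball 0 R) (\<lambda>_. \<phi>)"
  proof (rule local_lipschitzI)
    fix t x assume "t \<in> {0::real}" "x \<in> cball (0::real^'p^'n) R"
    obtain r L where r: "r > 0" and L: "\<forall>y\<in>ball x r. \<forall>z\<in>ball x r. dist (\<phi> y) (\<phi> z) \<le> L * dist y z"
      using assms unfolding locally_lipschitz_def by blast
    have L': "dist (\<phi> y) (\<phi> z) \<le> max L 0 * dist y z" if "y \<in> ball x r" "z \<in> ball x r" for y z
    proof -
      have "dist (\<phi> y) (\<phi> z) \<le> L * dist y z" using L that by blast
      also have "\<dots> \<le> max L 0 * dist y z" by (intro mult_right_mono) auto
      finally show ?thesis .
    qed
    have "(max L 0)-lipschitz_on (cball x (r/2) \<inter> cball 0 R) \<phi>"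
      using L' r by (intro lipschitz_onI) auto
    then show "\<exists>u>0. \<exists>L. \<forall>t\<in>cball t u \<inter> {0}. L-lipschitz_on (cball x u \<inter> cball 0 R) ((\<lambda>_. \<phi>) t)"
      using r by (intro exI[of _ "r/2"]) auto
  qed
  obtain L where "\<And>t. t \<in> {0::real} \<Longrightarrow> L-lipschitz_on (cball 0 R) ((\<lambda>_. \<phi>) t)"
    by (rule local_lipschitz_compact_implies_lipschitz[OF ll compact_cball compact_sing]) auto
  then show ?thesis using that by auto
qed




lemma M2_bound:
  fixes f :: "real^'p^'n \<Rightarrow> real"
  assumes fd: "\<forall>Y. f differentiable (at Y)"
    and Lf: "locally_lipschitz (egrad f)"
    and gd: "\<forall>Y. egrad f differentiable (at Y)"
    and XtX: "transpose X ** X = mat 1"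
  shows "norm (ehess (g_of f) X v) \<le> M2 f * norm v"
proof -
  let ?\<phi> = "egrad (g_of f)"
  define c where "c = real CARD('n) * real CARD('p)"
  have a: "1 \<le> real CARD('n)" by (simp add: Suc_le_eq)
  have b: "1 \<le> real CARD('p)" by (simp add: Suc_le_eq)
  have "1 * 1 \<le> real CARD('n) * real CARD('p)" by (rule mult_mono) (use a b in auto)
  then have c1: "c \<ge> 1" unfolding c_def by simp
  define R where "R = c * 2"
  obtain L where L: "L-lipschitz_on (cball 0 R) ?\<phi>"
    using lipschitz_on_cball[OF LL_egrad_g[OF fd Lf]] by blast
  have OmR: "Y \<in> cball 0 R" if "Y \<in> Omega" for Y :: "real^'p^'n"
  proof -
    have "norm Y \<le> c * spec_norm Y" unfolding c_def by (rule norm_le_spec)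
    also have "\<dots> \<le> c * 2" using that c1 unfolding Omega_def by (intro mult_left_mono) auto
    finally show ?thesis unfolding R_def by simp
  qed
  define Q where "Q = {norm (?\<phi> X - ?\<phi> Y) / norm (X - Y) | X Y. X \<in> Omega \<and> Y \<in> Omega \<and> X \<noteq> Y}"
  have M2: "M2 f = Sup Q" unfolding M2_def Q_def ..
  have bdd: "bdd_above Q"
  proof (rule bdd_aboveI)
    fix q assume "q \<in> Q"
    then obtain Y Z where q: "q = norm (?\<phi> Y - ?\<phi> Z) / norm (Y - Z)" and YZ: "Y \<in> Omega" "Z \<in> Omega" "Y \<noteq> Z"
      unfolding Q_def by blast
    have "dist (?\<phi> Y) (?\<phi> Z) \<le> L * dist Y Z" using lipschitz_onD[OF L] OmR YZ by blast
    then show "q \<le> L" unfolding q using YZ by (simp add: dist_norm divide_le_eq)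
  qed
  have inQ: "norm (?\<phi> Y - ?\<phi> Z) / norm (Y - Z) \<le> M2 f" if "Y \<in> Omega" "Z \<in> Omega" "Y \<noteq> Z" for Y Z
    unfolding M2 by (rule cSup_upper[OF _ bdd]) (use that Q_def in blast)
  define A where "A = ehess (g_of f) X"
  have dg: "(?\<phi> has_derivative A) (at X)"
  proof -
    have d: "(?\<phi> has_derivative (\<lambda>E. Jst X (ehess f (Psi X) (Jst X E)) + Jd X E (egrad f (Psi X)))) (at X)"
      by (rule egrad_g_deriv[OF fd gd])
    have "A = (\<lambda>E. Jst X (ehess f (Psi X) (Jst X E)) + Jd X E (egrad f (Psi X)))"
      unfolding A_def by (simp add: ehess_def[of "g_of f"] frechet_derivative_at[OF d])
    then show ?thesis using d by simp
  qed
  have Alin: "linear A" using dg has_derivative_linear by blast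
  have XO: "X \<in> Omega" using spec_norm_X[OF XtX] unfolding Omega_def by simp
  show ?thesis
  proof (cases "v = 0")
    case True
    then show ?thesis using Alin linear_0 unfolding A_def by fastforce
  next
    case False
    then have nv: "norm v > 0" by simp
    have "norm (A v) \<le> M2 f * norm v + e" if e: "e > 0" for e
    proof -
      define \<epsilon> where "\<epsilon> = e / norm v"
      have \<epsilon>: "\<epsilon> > 0" unfolding \<epsilon>_def using e nv by simp
      obtain d where d: "d > 0" and dd: "\<And>y. norm (y - X) < d \<Longrightarrow> norm (?\<phi> y - ?\<phi> X - A (y - X)) \<le> \<epsilon> * norm (y - X)"
        using dg[unfolded has_derivative_at_alt] \<epsilon> by blast
      define t where "t = min (d / (2 * norm v)) (1 / (12 * c * norm v))"
      have t: "t > 0" unfolding t_def using d nv c1 by simp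
      define Y where "Y = X + t *\<^sub>R v"
      have YX: "Y - X = t *\<^sub>R v" unfolding Y_def by simp
      have ntv: "norm (t *\<^sub>R v) = t * norm v" using t by simp
      have "t * norm v \<le> d / 2"
      proof -
        have "t \<le> d / (2 * norm v)" unfolding t_def by simp
        then show ?thesis using nv by (simp add: field_simps)
      qed
      then have near: "norm (Y - X) < d" using d unfolding YX ntv by linarith
      have YO: "Y \<in> Omega"
      proof -
        have "spec_norm Y \<le> spec_norm X + spec_norm (t *\<^sub>R v)" unfolding Y_def by (rule spec_norm_triangle)
        also have "spec_norm (t *\<^sub>R v) \<le> c * (t * norm v)" unfolding c_def
          using spec_norm_le_norm[of "t *\<^sub>R v"] unfolding ntv .
        also have "c * (t * norm v) \<le> 1/12"
        proof -
          have "t \<le> 1 / (12 * c * norm v)" unfolding t_def by simp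
          then show ?thesis using nv c1 by (simp add: field_simps)
        qed
        finally show ?thesis using spec_norm_X[OF XtX] unfolding Omega_def by simp
      qed
      have YneX: "Y \<noteq> X" using YX t False by auto
      have r: "norm (?\<phi> Y - ?\<phi> X) \<le> M2 f * norm (Y - X)"
        using inQ[OF YO XO YneX] YneX by (simp add: divide_le_eq)
      have "A (t *\<^sub>R v) = (?\<phi> Y - ?\<phi> X) - (?\<phi> Y - ?\<phi> X - A (Y - X))" using YX by simp
      then have "norm (A (t *\<^sub>R v)) \<le> norm (?\<phi> Y - ?\<phi> X) + norm (?\<phi> Y - ?\<phi> X - A (Y - X))"
        by (simp only: norm_triangle_ineq4)
      also have "\<dots> \<le> M2 f * norm (Y - X) + \<epsilon> * norm (Y - X)"
        using r dd[OF near] by (rule add_mono)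
      finally have "t * norm (A v) \<le> t * (M2 f * norm v + e)"
        using YX ntv t nv unfolding \<epsilon>_def by (simp add: linear_scale[OF Alin] field_simps)
      then show ?thesis using t by simp
    qed
    then have "norm (A v) \<le> M2 f * norm v" by (rule field_le_epsilon)
    then show ?thesis unfolding A_def .
  qed
qed



lemma sym_part_tr: "sym_part (transpose M) = sym_part (M::real^'k^'k)"
  unfolding sym_part_def by (simp add: add.commute)
lemma sym_part_sym: "transpose (sym_part M) = sym_part (M::real^'k^'k)"
  unfolding sym_part_def by (simp add: transpose_scalar tr_add add.commute)
lemma sym_part_lin: "sym_part (A - B) = sym_part A - sym_part (B::real^'k^'k)"
  unfolding sym_part_def by (simp add: tr_diff algebra_simps)
lemma sym_part_symm: "transpose M = M \<Longrightarrow> sym_part M = (M::real^'k^'k)"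
  unfolding sym_part_def by (simp add: scaleR_2[symmetric])
lemma sym_part_idem: "sym_part (sym_part M) = sym_part (M::real^'k^'k)"
  by (rule sym_part_symm[OF sym_part_sym])
lemma sym_part_trmul: "sym_part (transpose A ** B) = sym_part (transpose B ** (A::real^'k^'n))"
  by (metis sym_part_tr matrix_transpose_mul transpose_transpose)

lemma P_tangent:
  fixes X :: "real^'p^'n"
  assumes XtX: "transpose X ** X = mat 1"
  shows "proj_tangent X w \<in> tangent_space X"
proof -
  have "transpose X ** proj_tangent X w = transpose X ** w - sym_part (transpose X ** w)"
    unfolding proj_tangent_def by (simp add: mmsimps r1[OF XtX])
  then have "sym_part (transpose X ** proj_tangent X w) = 0"
    by (simp add: sym_part_lin sym_part_idem)
  then show ?thesis unfolding tangent_space_def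
    using sym_part_trmul[of "proj_tangent X w" X] by simp
qed

lemma P_idem:
  fixes X :: "real^'p^'n"
  assumes XtX: "transpose X ** X = mat 1"
  shows "proj_tangent X (proj_tangent X w) = proj_tangent X w"
proof -
  have "transpose X ** proj_tangent X w = transpose X ** w - sym_part (transpose X ** w)"
    unfolding proj_tangent_def by (simp add: mmsimps r1[OF XtX])
  then have "sym_part (transpose X ** proj_tangent X w) = 0"
    by (simp add: sym_part_lin sym_part_idem)
  then show ?thesis unfolding proj_tangent_def[of X "proj_tangent X w"] by simp
qed

lemma P_tangent_id:
  fixes X :: "real^'p^'n"
  assumes "D \<in> tangent_space X"
  shows "proj_tangent X D = D"
proof -
  have "sym_part (transpose D ** X) = 0" using assms unfolding tangent_space_def by simp
  then have "sym_part (transpose X ** D) = 0"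
    by (simp only: sym_part_trmul[of X D])
  then show ?thesis unfolding proj_tangent_def by simp
qed

theorem mainTheorem12:
  fixes f :: "real^'p^'n \<Rightarrow> real" and \<beta> :: real and X :: "real^'p^'n"
  assumes "CARD('p) \<le> CARD('n)"
    and "\<beta> > 0"
    and "\<forall>Y. f differentiable (at Y)"
    and "locally_lipschitz f"
    and "locally_lipschitz (egrad f)"
    and "\<forall>Y. egrad f differentiable (at Y)"
    and "first_order_stationary f X"
  shows "(\<forall>l. is_eigenvalue_on (tangent_space X) (rhess f X) l
              \<longrightarrow> is_eigenvalue_on UNIV (ehess (h_of f \<beta>) X) l)
       \<and> (\<forall>l. is_eigenvalue_on UNIV (ehess (h_of f \<beta>) X) l
              \<longrightarrow> is_eigenvalue_on (tangent_space X) (rhess f X) l \<or> l \<ge> 2 * \<beta> - M2 f)"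
proof -
  note fd = assms(3) and gd = assms(6)
  have XtX: "transpose X ** X = mat 1" and st: "egrad f X - X ** sym_part (transpose X ** egrad f X) = 0"
    using assms(7) unfolding first_order_stationary_def stiefel_def by auto
  define G where "G = egrad f X"
  define S where "S = sym_part (transpose X ** G)"
  have GS: "G = X ** S" using st unfolding G_def S_def by simp
  have S: "transpose S = S" unfolding S_def by (rule sym_part_sym)
  define H where "H = ehess f X"
  have PX: "Psi X = X" by (rule Psi_X[OF XtX])
  have Hlin: "linear H" unfolding H_def ehess_def
    using gd frechet_derivative_works has_derivative_linear by blast
  have dh: "(egrad (h_of f \<beta>) has_derivative (\<lambda>E. Jst X (H (Jst X E)) + Jd X E G
      + \<beta> *\<^sub>R (E ** (transpose X ** X - mat 1) + X ** (transpose X ** E + transpose E ** X)))) (at X)"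
    using egrad_h_deriv[OF fd gd, of \<beta> X] unfolding PX H_def G_def .
  have Hh: "ehess (h_of f \<beta>) X = (\<lambda>E. Jst X (H (Jst X E)) + Jd X E G
      + \<beta> *\<^sub>R (E ** (transpose X ** X - mat 1) + X ** (transpose X ** E + transpose E ** X)))"
    unfolding ehess_def using frechet_derivative_at[OF dh] by simp
  have Hhlin: "linear (ehess (h_of f \<beta>) X)" using has_derivative_linear[OF dh] Hh by simp
  have dg: "(egrad (g_of f) has_derivative (\<lambda>E. Jst X (H (Jst X E)) + Jd X E G)) (at X)"
    using egrad_g_deriv[OF fd gd, of X] unfolding PX H_def G_def .
  have Hg: "ehess (g_of f) X = (\<lambda>E. Jst X (H (Jst X E)) + Jd X E G)"
    unfolding ehess_def using frechet_derivative_at[OF dg] by simp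
  have rh: "rhess f X D = proj_tangent X (H D - D ** S)" for D
    unfolding rhess_def H_def S_def G_def ..
  have tan: "ehess (h_of f \<beta>) X D = rhess f X D" if D: "D \<in> tangent_space X" for D
  proof -
    have Dt: "transpose D ** X = - (transpose X ** D)" using D tangent_iff by blast
    have "ehess (h_of f \<beta>) X D = proj_tangent X (H D) + (Jd X D (X ** S)
      + \<beta> *\<^sub>R (D ** (transpose X ** X - mat 1) + X ** (transpose X ** D + transpose D ** X)))"
      unfolding Hh G_def[symmetric] GS by (simp only: Jst_X[OF XtX] P_tangent_id[OF D] add.assoc)
    also have "\<dots> = proj_tangent X (H D) - proj_tangent X (D ** S)"
      by (subst ehess_tangent_alg[OF XtX S Dt]) simp
    also have "\<dots> = rhess f X D" unfolding rh by (simp add: proj_lin)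
    finally show ?thesis .
  qed
  have part1: "\<forall>l. is_eigenvalue_on (tangent_space X) (rhess f X) l
              \<longrightarrow> is_eigenvalue_on UNIV (ehess (h_of f \<beta>) X) l"
  proof (intro allI impI)
    fix l assume "is_eigenvalue_on (tangent_space X) (rhess f X) l"
    then obtain v where "v \<in> tangent_space X" "v \<noteq> 0" "rhess f X v = l *\<^sub>R v"
      unfolding is_eigenvalue_on_def by blast
    then show "is_eigenvalue_on UNIV (ehess (h_of f \<beta>) X) l"
      unfolding is_eigenvalue_on_def using tan by auto
  qed
  have part2: "is_eigenvalue_on (tangent_space X) (rhess f X) l \<or> l \<ge> 2 * \<beta> - M2 f"
    if ev: "is_eigenvalue_on UNIV (ehess (h_of f \<beta>) X) l" for l
  proof -
    obtain v where v0: "v \<noteq> 0" and ev: "ehess (h_of f \<beta>) X v = l *\<^sub>R v"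
      using ev unfolding is_eigenvalue_on_def by auto
    define vt where "vt = proj_tangent X v"
    define W where "W = sym_part (transpose X ** v)"
    have W: "transpose W = W" unfolding W_def by (rule sym_part_sym)
    have vsplit: "v = vt + X ** W" unfolding vt_def W_def proj_tangent_def by simp
    have vtT: "vt \<in> tangent_space X" unfolding vt_def by (rule P_tangent[OF XtX])
    define M where "M = (2 * \<beta>) *\<^sub>R W - (3/2) *\<^sub>R (S ** W + W ** S)"
    have M: "transpose M = M" unfolding M_def by (simp add: mmsimps S W algebra_simps)
    have J0: "Jst X (X ** W) = 0" by (rule Jst_normal[OF XtX W])
    have H0: "H 0 = 0" using Hlin linear_0 by blast
    have Jst0: "Jst X 0 = 0" by (simp add: Jst_X[OF XtX] proj_tangent_def sym_part_def tr_zero)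
    have hn: "ehess (h_of f \<beta>) X (X ** W) = X ** M"
      unfolding Hh M_def G_def[symmetric] GS
      by (simp only: J0 H0 Jst0 add_0_left ehess_normal_alg[OF XtX S W])
    have "l *\<^sub>R vt + l *\<^sub>R (X ** W) = l *\<^sub>R v" using vsplit by (simp add: scaleR_add_right)
    also have "\<dots> = ehess (h_of f \<beta>) X v" using ev by simp
    also have "\<dots> = ehess (h_of f \<beta>) X vt + ehess (h_of f \<beta>) X (X ** W)"
      using vsplit linear_add[OF Hhlin] by metis
    also have "\<dots> = rhess f X vt + X ** M" using tan[OF vtT] hn by simp
    finally have "l *\<^sub>R vt + l *\<^sub>R (X ** W) = rhess f X vt + X ** M" .
    then have "proj_tangent X (l *\<^sub>R vt + l *\<^sub>R (X ** W)) = proj_tangent X (rhess f X vt + X ** M)" by simp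
    moreover have "proj_tangent X (l *\<^sub>R vt + l *\<^sub>R (X ** W)) = l *\<^sub>R vt"
      unfolding proj_lin proj_sym[OF XtX W] vt_def P_idem[OF XtX] by simp
    moreover have "proj_tangent X (rhess f X vt + X ** M) = rhess f X vt"
      unfolding proj_lin proj_sym[OF XtX M] rh P_idem[OF XtX] by simp
    ultimately have eq: "l *\<^sub>R vt = rhess f X vt" by simp
    show ?thesis
    proof (cases "vt = 0")
      case False
      then show ?thesis using eq vtT unfolding is_eigenvalue_on_def by auto
    next
      case True
      then have vW: "v = X ** W" using vsplit by simp
      have p: "\<beta> *\<^sub>R ((X ** W) ** (transpose X ** X - mat 1) + X ** (transpose X ** (X ** W) + transpose (X ** W) ** X))
          = (2 * \<beta>) *\<^sub>R (X ** W)"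
      proof -
        have "transpose (X ** W) ** X = W"
          by (simp add: matrix_transpose_mul W matrix_mul_assoc[symmetric] XtX)
        then show ?thesis by (simp add: XtX r1[OF XtX] matrix_add_ldistrib scaleR_2[symmetric] mm_rscale)
      qed
      have "ehess (h_of f \<beta>) X v = ehess (g_of f) X v + (2 * \<beta>) *\<^sub>R v"
        unfolding Hh Hg vW by (simp only: p add.assoc)
      with ev have "ehess (g_of f) X v = (l - 2 * \<beta>) *\<^sub>R v" by (simp add: algebra_simps)
      then have "\<bar>l - 2 * \<beta>\<bar> * norm v \<le> M2 f * norm v"
        using M2_bound[OF fd assms(5) gd XtX, of v] by simp
      then have "\<bar>l - 2 * \<beta>\<bar> \<le> M2 f" using v0 by simp
      then show ?thesis by linarith
    qed
  qed
  show ?thesis using part1 part2 by blast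
qed


end
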